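(* Let $r\ge 2$, let $\lambda,\mu\in\Lambda$ with $\lambda\sim_e\mu$, and let $s\in\mathbb{Z}$. Then $\eta(\lambda,s)\xrightarrow{r}_1\eta(\mu,s)$ (as elements of $\mathcal{A}_r^e$) if and only if $\Phi_r(\lambda,s)\xrightarrow{e}_1\Phi_r(\mu,s)$ (as elements of $\mathcal{A}_e^r$).
   Context: Fix an integer $e\ge 2$. A partition is a weakly decreasing sequence $\lambda=(\lambda_1,\lambda_2,\dots)$ of non-negative integers with finite sum $|\lambda|$; $\Lambda$ denotes the set of partitions and $\Lambda^{(m)}$ the set of $m$-multipartitions, i.e. $m$-tuples $\boldsymbol\lambda=(\lambda^{(1)},\dots,\lambda^{(m)})$ of partitions, with $|\boldsymbol\lambda|=\sum_k|\lambda^{(k)}|$. A $\beta$-set is a subset $B\subseteq\mathbb{Z}$ containing all sufficiently small integers and no sufficiently large ones. For $\lambda\in\Lambda$ and $s\in\mathbb{Z}$ set $B_s(\lambda)=\{\lambda_i-i+s : i\ge 1\}$; every $\beta$-set equals $B_s(\lambda)$ for a unique pair $(\lambda,s)$. For $N\ge 2$ let $\mathcal{A}_N=\Lambda\times\mathbb{Z}$ (abacus configurations with $N$ runners) and $\mathcal{A}_N^m=\Lambda^{(m)}\times\mathbb{Z}^m$, where $(\boldsymbol\lambda,\mathbf{s})$ is identified with the $m$-tuple of $\beta$-sets $(B_{s_1}(\lambda^{(1)}),\dots,B_{s_m}(\lambda^{(m)}))$. The map $\eta$: for $(\lambda,s)\in\mathcal{A}_e$ with $B=B_s(\lambda)$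 and $0\le i<e$, the set $C_i=\{(b-i)/e : b\in B,\ b\equiv i \bmod e\}$ is a $\beta$-set, so $C_i=B_{t_i}(\rho_i)$ for a unique $(\rho_i,t_i)\in\Lambda\times\mathbb{Z}$; set $\eta(\lambda,s)=((\rho_0,\dots,\rho_{e-1}),(t_0,\dots,t_{e-1}))\in\Lambda^{(e)}\times\mathbb{Z}^e$, which we also regard as an element of $\mathcal{A}_r^e$. The $e$-weight of $\lambda$ is $\mathrm{wt}(\lambda)=\sum_i|\rho_i|$. For $\lambda,\mu\in\Lambda$ write $\lambda\sim_e\mu$ if $|\lambda|=|\mu|$, $\mathrm{wt}(\lambda)=\mathrm{wt}(\mu)$ and $\lambda,\mu$ have the same $e$-core (equivalently, $(\lambda,s)$ and $(\mu,s)$ have the same $t$-component under $\eta$ and the same weight, for any $s$). Moves on $\mathcal{A}_N^m$, for $(\boldsymbol\lambda,\mathbf{s}),(\boldsymbol\mu,\mathbf{s})$ with the same $\mathbf{s}$: (1) $(\boldsymbol\lambda,\mathbf{s})\xrightarrow{N}_1(\boldsymbol\mu,\mathbf{s})$ if for some $k_1,k_2\in\{1,\dots,m\}$ the tuple of $\beta$-sets of $(\boldsymbol\mu,\mathbf{s})$ is obtained from that of $(\boldsymbol\lambda,\mathbf{s})$ by replacing an element $b$ of the $k_1$-th $\beta$-set by $b-N$ (not previously in that set) and then replacing an element $c$ of the $k_2$-th $\beta$-set by $c+N$ (not previously in that set). (2) $(\boldsymbol\lambda,\mathbf{s})\xrightarrow{N}_2(\boldsymbol\mu,\mathbf{s})$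 if there exist $k_1,k_2\in\{1,\dots,m\}$, $b_1,b_2\in\mathbb{Z}$ with $b_1\equiv b_2\bmod N$, and $h>0$, such that $b_1\in B_{s_{k_1}}(\lambda^{(k_1)})$, $b_1+h\notin B_{s_{k_1}}(\lambda^{(k_1)})$, $b_2\notin B_{s_{k_2}}(\lambda^{(k_2)})$, $b_2+h\in B_{s_{k_2}}(\lambda^{(k_2)})$, and the $\beta$-sets of $(\boldsymbol\mu,\mathbf{s})$ agree with those of $(\boldsymbol\lambda,\mathbf{s})$ except that $b_1$ is replaced by $b_1+h$ in component $k_1$ and $b_2+h$ is replaced by $b_2$ in component $k_2$. Uglov's map: for $1\le k\le r$ define $\psi_k:\mathbb{Z}\to\mathbb{Z}$ by $\psi_k(ae+i)=((a+1)r-k)e+i$ for $a\in\mathbb{Z}$, $0\le i<e$. For $(\boldsymbol\lambda,\mathbf{s})\in\mathcal{A}_e^r$ the set $B=\bigsqcup_{k=1}^r\psi_k(B_{s_k}(\lambda^{(k)}))$ is a $\beta$-set, and $\Psi_r(\boldsymbol\lambda,\mathbf{s})$ is the unique $(\tilde\lambda,\tilde s)\in\mathcal{A}_e$ with $B_{\tilde s}(\tilde\lambda)=B$. $\Psi_r:\mathcal{A}_e^r\to\mathcal{A}_e$ is a bijection; $\Phi_r=\Psi_r^{-1}$. *)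

theory Defs
  imports Main
begin

text \<open>Partitions are represented as weakly decreasing lists of positive naturals;
  lambda_i (i >= 1) is the (i-1)-th list entry, or 0 beyond the length.\<close>

type_synonym partition = "nat list"

definition is_part :: "partition \<Rightarrow> bool" where
  "is_part lam \<longleftrightarrow> sorted_wrt (\<ge>) lam \<and> (\<forall>x\<in>set lam. 0 < x)"

definition part_at :: "partition \<Rightarrow> nat \<Rightarrow> nat" where
  "part_at lam i = (if 1 \<le> i \<and> i \<le> length lam then lam ! (i - 1) else 0)"

definition psize :: "partition \<Rightarrow> nat" where
  "psize lam = sum_list lam"

definition Bset :: "int \<Rightarrow> partition \<Rightarrow> int set" where
  "Bset s lam = {int (part_at lam i) - int i + s | i. 1 \<le> i}"

definition is_beta_set :: "int set \<Rightarrow> bool" where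
  "is_beta_set B \<longleftrightarrow> (\<exists>n. \<forall>x\<le>n. x \<in> B) \<and> (\<exists>n. \<forall>x\<ge>n. x \<notin> B)"

definition pair_of :: "int set \<Rightarrow> partition \<times> int" where
  "pair_of B = (THE p. is_part (fst p) \<and> Bset (snd p) (fst p) = B)"

text \<open>Configurations: A_N = Lambda x Z and A_N^m = Lambda^(m) x Z^m
  (multipartitions and charges as lists of length m, component k is list index k-1).
  The number of runners N plays no role in the carrier.\<close>
type_synonym config = "partition \<times> int"
type_synonym mconfig = "partition list \<times> int list"

definition in_A :: "nat \<Rightarrow> mconfig \<Rightarrow> bool" where
  "in_A m X \<longleftrightarrow> length (fst X) = m \<and> length (snd X) = m \<and> (\<forall>lam\<in>set (fst X). is_part lam)"

definition bsets :: "mconfig \<Rightarrow> int set list" where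
  "bsets X = map (\<lambda>k. Bset (snd X ! k) (fst X ! k)) [0..<length (fst X)]"

definition move1 :: "nat \<Rightarrow> nat \<Rightarrow> mconfig \<Rightarrow> mconfig \<Rightarrow> bool" where
  "move1 N m X Y \<longleftrightarrow> in_A m X \<and> in_A m Y \<and> snd X = snd Y \<and>
     (\<exists>k1<m. \<exists>k2<m. \<exists>b c.
        let B = bsets X; B' = B[k1 := insert (b - int N) (B ! k1 - {b})] in
        b \<in> B ! k1 \<and> b - int N \<notin> B ! k1 \<and>
        c \<in> B' ! k2 \<and> c + int N \<notin> B' ! k2 \<and>
        bsets Y = B'[k2 := insert (c + int N) (B' ! k2 - {c})])"

definition eta :: "nat \<Rightarrow> config \<Rightarrow> mconfig" where
  "eta e X = (let B = Bset (snd X) (fst X);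
                  C = (\<lambda>i::nat. {(b - int i) div int e | b. b \<in> B \<and> b mod int e = int i});
                  p = (\<lambda>i. pair_of (C i))
              in (map (\<lambda>i. fst (p i)) [0..<e], map (\<lambda>i. snd (p i)) [0..<e]))"

definition weight :: "nat \<Rightarrow> partition \<Rightarrow> nat" where
  "weight e lam = sum_list (map psize (fst (eta e (lam, 0))))"

text \<open>The e-core: the partition whose abacus (charge 0) has the same runner charges
  and empty quotient.\<close>
definition ecore :: "nat \<Rightarrow> partition \<Rightarrow> partition" where
  "ecore e lam = (THE kap. is_part kap \<and>
       eta e (kap, 0) = (replicate e [], snd (eta e (lam, 0))))"

definition sim_e :: "nat \<Rightarrow> partition \<Rightarrow> partition \<Rightarrow> bool" where
  "sim_e e lam mu \<longleftrightarrow> psize lam = psize mu \<and> weight e lam = weight e mu \<and> ecore e lam = ecore e mu"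

definition psi :: "nat \<Rightarrow> nat \<Rightarrow> nat \<Rightarrow> int \<Rightarrow> int" where
  "psi e r k b = ((b div int e + 1) * int r - int k) * int e + b mod int e"

definition Psi :: "nat \<Rightarrow> nat \<Rightarrow> mconfig \<Rightarrow> config" where
  "Psi e r X = pair_of (\<Union>k\<in>{1..r}. psi e r k ` Bset (snd X ! (k - 1)) (fst X ! (k - 1)))"

definition Phi :: "nat \<Rightarrow> nat \<Rightarrow> config \<Rightarrow> mconfig" where
  "Phi e r Z = (THE X. in_A r X \<and> Psi e r X = Z)"

end

theory Submission
  imports Defs
begin

lemma part_at_Cons1[simp]: "part_at (a # l) 1 = a" "part_at (a # l) (Suc 0) = a"
  by (simp_all add: part_at_def)

lemma part_at_Cons_Suc: "1 \<le> j \<Longrightarrow> part_at (a # l) (Suc j) = part_at l j"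
  by (auto simp: part_at_def nth_Cons')

lemma part_at_beyond: "length l < i \<Longrightarrow> part_at l i = 0"
  by (simp add: part_at_def)

lemma part_at_mono:
  assumes "is_part l" "1 \<le> i" "i \<le> j" shows "part_at l j \<le> part_at l i"
proof (cases "j \<le> length l")
  case True
  show ?thesis
  proof (cases "i = j")
    case False
    then have "l!(j-1) \<le> l!(i-1)" using assms True
      sorted_wrt_nth_less[of "(\<ge>)" l "i-1" "j-1"] by (auto simp: is_part_def)
    then show ?thesis using assms True by (auto simp: part_at_def)
  qed simp
next
  case False then show ?thesis by (simp add: part_at_def)
qed

lemma part_at_pos:
  assumes "is_part l" "1 \<le> i" "i \<le> length l" shows "1 \<le> part_at l i"
  using assms by (auto simp: part_at_def is_part_def Suc_le_eq)

lemma part_at_le_sum: "part_at l i \<le> sum_list l"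
  by (auto simp: part_at_def elem_le_sum_list)

lemma Bset_mem: "x \<in> Bset s l \<longleftrightarrow> (\<exists>i\<ge>1. x = int (part_at l i) - int i + s)"
  by (auto simp: Bset_def)

lemma Bset_image: "Bset s l = (\<lambda>i. int (part_at l i) - int i + s) ` {1..}"
  by (auto simp: Bset_def)

lemma Bset_strict:
  assumes "is_part l" "1 \<le> i" "i < j"
  shows "int (part_at l j) - int j + s < int (part_at l i) - int i + s"
  using part_at_mono[OF assms(1,2), of j] assms(3) by linarith

lemma dec_unique:
  fixes f g :: "nat \<Rightarrow> int"
  assumes f: "\<And>i j. 1 \<le> i \<Longrightarrow> i < j \<Longrightarrow> f j < f i"
    and g: "\<And>i j. 1 \<le> i \<Longrightarrow> i < j \<Longrightarrow> g j < g i"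
    and im: "f ` {1..} = g ` {1..}"
  shows "1 \<le> n \<Longrightarrow> f n = g n"
proof (induction n rule: less_induct)
  case (less n)
  have "f n \<in> g ` {1..}" using im less.prems by auto
  then obtain j where j: "1 \<le> j" "f n = g j" by auto
  have "\<not> j < n"
  proof
    assume "j < n"
    then have "g j = f j" using less.IH j(1) by auto
    moreover have "f n < f j" using f j(1) \<open>j < n\<close> by auto
    ultimately show False using j by simp
  qed
  then have "g j \<le> g n" using g less.prems by (cases "j = n") (auto simp: less_imp_le)
  have "g n \<in> f ` {1..}" using im less.prems by auto
  then obtain j' where j': "1 \<le> j'" "g n = f j'" by auto
  have "\<not> j' < n"
  proof
    assume "j' < n"
    then have "g j' = f j'" using less.IH j'(1) by auto
    moreover have "g n < g j'" using g j'(1) \<open>j' < n\<close> by auto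
    ultimately show False using j' by simp
  qed
  then have "f j' \<le> f n" using f less.prems by (cases "j' = n") (auto simp: less_imp_le)
  show ?case using \<open>g j \<le> g n\<close> \<open>f j' \<le> f n\<close> j j' by simp
qed

lemma part_eq:
  assumes "is_part l" "is_part l'" "\<And>i. 1 \<le> i \<Longrightarrow> part_at l i = part_at l' i"
  shows "l = l'"
proof -
  have "length l = length l'"
  proof (rule ccontr)
    assume "length l \<noteq> length l'"
    then consider "length l < length l'" | "length l' < length l" by linarith
    then show False
    proof cases
      case 1
      then have "1 \<le> part_at l' (length l')" using part_at_pos[OF assms(2)] by simp
      moreover have "part_at l (length l') = 0" using 1 part_at_beyond by simp
      ultimately show False using assms(3)[of "length l'"] 1 by simp
    next
      case 2
      then have "1 \<le> part_at l (length l)" using part_at_pos[OF assms(1)] by simp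
      moreover have "part_at l' (length l) = 0" using 2 part_at_beyond by simp
      ultimately show False using assms(3)[of "length l"] 2 by simp
    qed
  qed
  moreover have "l ! k = l' ! k" if "k < length l" for k
    using assms(3)[of "Suc k"] that \<open>length l = length l'\<close> by (simp add: part_at_def)
  ultimately show ?thesis by (simp add: nth_equalityI)
qed

lemma Bset_inj:
  assumes "is_part l" "is_part l'" "Bset s l = Bset s' l'"
  shows "l = l' \<and> s = s'"
proof -
  let ?f = "\<lambda>i. int (part_at l i) - int i + s"
  let ?g = "\<lambda>i. int (part_at l' i) - int i + s'"
  have eq: "?f n = ?g n" if "1 \<le> n" for n
    by (rule dec_unique[OF _ _ _ that]) (use Bset_strict[OF assms(1)] Bset_strict[OF assms(2)] assms(3) in \<open>auto simp: Bset_image\<close>)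
  define n where "n = Suc (max (length l) (length l'))"
  have "s = s'" using eq[of n] by (simp add: n_def part_at_beyond)
  then have "part_at l i = part_at l' i" if "1 \<le> i" for i using eq[OF that] by simp
  then show ?thesis using part_eq assms \<open>s = s'\<close> by blast
qed

lemma Bset_beta: "is_beta_set (Bset s l)"
  unfolding is_beta_set_def
proof
  show "\<exists>n. \<forall>x\<le>n. x \<in> Bset s l"
  proof (intro exI allI impI)
    fix x assume x: "x \<le> s - int (length l) - 1"
    define i where "i = nat (s - x)"
    have "1 \<le> i" "length l < i" using x by (auto simp: i_def)
    then show "x \<in> Bset s l" unfolding Bset_mem
      by (intro exI[of _ i]) (auto simp: part_at_beyond i_def)
  qed
  show "\<exists>n. \<forall>x\<ge>n. x \<notin> Bset s l"
  proof (intro exI allI impI)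
    fix x assume x: "s + int (sum_list l) \<le> x"
    show "x \<notin> Bset s l"
    proof
      assume "x \<in> Bset s l"
      then obtain i where "1 \<le> i" "x = int (part_at l i) - int i + s" by (auto simp: Bset_mem)
      then show False using part_at_le_sum[of l i] x by linarith
    qed
  qed
qed

lemma Bset_Nil: "Bset s [] = {x. x < s}"
proof -
  have "x \<in> Bset s []" if "x < s" for x
    unfolding Bset_mem by (rule exI[of _ "nat (s - x)"]) (use that in \<open>auto simp: part_at_def\<close>)
  then show ?thesis by (auto simp: Bset_mem part_at_def)
qed

lemma Bset_Cons: "Bset (s + 1) (a # l) = insert (int a + s) (Bset s l)"
proof -
  have "x \<in> Bset (s+1) (a # l) \<longleftrightarrow> x = int a + s \<or> x \<in> Bset s l" for x
  proof
    assume "x \<in> Bset (s+1) (a # l)"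
    then obtain i where i: "1 \<le> i" "x = int (part_at (a#l) i) - int i + (s+1)" by (auto simp: Bset_mem)
    show "x = int a + s \<or> x \<in> Bset s l"
    proof (cases "i = 1")
      case True then show ?thesis using i by simp
    next
      case False
      then obtain j where j: "i = Suc j" "1 \<le> j" using i(1) by (cases i) auto
      then show ?thesis using i by (auto simp: Bset_mem part_at_Cons_Suc intro!: exI[of _ j])
    qed
  next
    assume "x = int a + s \<or> x \<in> Bset s l"
    then show "x \<in> Bset (s+1) (a # l)"
    proof
      assume "x = int a + s" then show ?thesis unfolding Bset_mem by (intro exI[of _ 1]) auto
    next
      assume "x \<in> Bset s l"
      then obtain j where j: "1 \<le> j" "x = int (part_at l j) - int j + s" by (auto simp: Bset_mem)
      then show ?thesis unfolding Bset_mem by (intro exI[of _ "Suc j"]) (auto simp: part_at_Cons_Suc)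
    qed
  qed
  then show ?thesis by auto
qed

lemma exists_rep_aux:
  "finite F \<Longrightarrow> F \<subseteq> {M..} \<Longrightarrow> \<exists>l s. is_part l \<and> Bset s l = {x. x < M} \<union> F"
proof (induction F rule: finite_linorder_max_induct)
  case empty
  then show ?case by (intro exI[of _ "[]"] exI[of _ M]) (auto simp: Bset_Nil is_part_def)
next
  case (insert b A)
  then obtain l s where ls: "is_part l" "Bset s l = {x. x < M} \<union> A" by auto
  have bM: "M \<le> b" using insert.prems by auto
  have gt: "y < b" if "y \<in> Bset s l" for y using that ls(2) insert.hyps(2) bM by auto
  have "int (part_at l 1) - 1 + s \<in> Bset s l" unfolding Bset_mem by (rule exI[of _ 1]) auto
  then have h1: "int (part_at l 1) - 1 + s < b" using gt by blast
  show ?case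
  proof (cases "b = s")
    case True
    then have "part_at l 1 = 0" using h1 by simp
    then have "l = []" using part_at_pos[OF ls(1), of 1] by (cases l) auto
    then have "Bset (s+1) [] = insert b (Bset s l)" using True by (auto simp: Bset_Nil)
    then show ?thesis using ls by (intro exI[of _ "[]"] exI[of _ "s+1"]) (auto simp: is_part_def)
  next
    case False
    define a where "a = nat (b - s)"
    have a1: "1 \<le> a" "int a + s = b" using h1 False by (auto simp: a_def)
    have ha: "part_at l 1 \<le> a" using h1 a1 by linarith
    have "is_part (a # l)"
    proof -
      have "y \<le> a" if "y \<in> set l" for y
      proof (cases l)
        case Nil then show ?thesis using that by simp
      next
        case (Cons h t)
        then have "y \<le> h" using that ls(1) by (auto simp: is_part_def)
        then show ?thesis using ha Cons by simp
      qed
      then show ?thesis using ls(1) a1 by (auto simp: is_part_def)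
    qed
    moreover have "Bset (s+1) (a # l) = {x. x < M} \<union> insert b A"
      using Bset_Cons[of s a l] a1 ls(2) by auto
    ultimately show ?thesis by blast
  qed
qed

lemma exists_rep: "is_beta_set B \<Longrightarrow> \<exists>l s. is_part l \<and> Bset s l = B"
proof -
  assume "is_beta_set B"
  then obtain n m where n: "\<forall>x\<le>n. x \<in> B" and m: "\<forall>x\<ge>m. x \<notin> B" by (auto simp: is_beta_set_def)
  have "x \<le> m" if "x \<in> B" for x using m that by (meson linorder_linear)
  then have "B \<inter> {n..} \<subseteq> {n..m}" by auto
  then have "finite (B \<inter> {n..})" using finite_subset by blast
  then obtain l s where "is_part l" "Bset s l = {x. x < n} \<union> (B \<inter> {n..})"
    using exists_rep_aux[of "B \<inter> {n..}" n] by auto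
  moreover have "{x. x < n} \<union> (B \<inter> {n..}) = B" using n by auto
  ultimately show ?thesis by auto
qed

lemma pair_of_Bset: "is_part l \<Longrightarrow> pair_of (Bset s l) = (l, s)"
  unfolding pair_of_def
  by (rule the_equality) (auto dest: Bset_inj)

lemma pair_of_beta:
  assumes "is_beta_set B"
  shows "is_part (fst (pair_of B)) \<and> Bset (snd (pair_of B)) (fst (pair_of B)) = B"
proof -
  obtain l s where "is_part l" "Bset s l = B" using exists_rep[OF assms] by auto
  then show ?thesis using pair_of_Bset[of l s] by auto
qed

lemma Bset_card:
  assumes "is_part l" "M \<le> s - int (length l)"
  shows "finite (Bset s l \<inter> {M..}) \<and> card (Bset s l \<inter> {M..}) = nat (s - M)"
proof -
  let ?f = "\<lambda>i. int (part_at l i) - int i + s"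
  have eq: "Bset s l \<inter> {M..} = ?f ` {1..nat (s - M)}"
  proof (intro equalityI subsetI)
    fix x assume "x \<in> Bset s l \<inter> {M..}"
    then obtain i where i: "1 \<le> i" "x = ?f i" "M \<le> x" by (auto simp: Bset_mem)
    have "i \<le> nat (s - M)"
    proof (cases "i \<le> length l")
      case True then show ?thesis using assms(2) by linarith
    next
      case False then show ?thesis using i by (simp add: part_at_beyond)
    qed
    then show "x \<in> ?f ` {1..nat (s - M)}" using i by auto
  next
    fix x assume "x \<in> ?f ` {1..nat (s - M)}"
    then obtain i where i: "1 \<le> i" "i \<le> nat (s - M)" "x = ?f i" by auto
    have "M \<le> x"
    proof (cases "i \<le> length l")
      case True then show ?thesis using part_at_pos[OF assms(1) i(1) True] assms(2) i by linarith
    next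
      case False then show ?thesis using i by (simp add: part_at_beyond)
    qed
    then show "x \<in> Bset s l \<inter> {M..}" using i by (auto simp: Bset_mem)
  qed
  have "inj_on ?f {1..nat (s - M)}"
  proof (rule inj_onI)
    fix i j assume "i \<in> {1..nat (s - M)}" "j \<in> {1..nat (s - M)}" "?f i = ?f j"
    then show "i = j" using Bset_strict[OF assms(1), of i j s] Bset_strict[OF assms(1), of j i s]
      by (cases i j rule: linorder_cases) auto
  qed
  then show ?thesis using eq card_image by fastforce
qed

lemma charge_move:
  assumes "is_part l" "is_part l'" "Bset t' l' = insert (b - N) (Bset t l - {b})"
    "b \<in> Bset t l" "b - N \<notin> Bset t l" "0 < N"
  shows "t = t'"
proof -
  define M where "M = min (min (t - int (length l)) (t' - int (length l'))) (b - N)"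
  have c1: "finite (Bset t l \<inter> {M..})" "card (Bset t l \<inter> {M..}) = nat (t - M)"
    using Bset_card[OF assms(1), of M t] by (auto simp: M_def)
  have c2: "card (Bset t' l' \<inter> {M..}) = nat (t' - M)"
    using Bset_card[OF assms(2), of M t'] by (auto simp: M_def)
  have "Bset t' l' \<inter> {M..} = insert (b - N) ((Bset t l \<inter> {M..}) - {b})"
    using assms(3,6) by (auto simp: M_def)
  moreover have mem: "b \<in> Bset t l \<inter> {M..}" "b - N \<notin> Bset t l \<inter> {M..}"
    using assms(4,5,6) by (auto simp: M_def)
  moreover have cl: "card (insert (b - N) (S - {b})) = card S" if "finite S" "b \<in> S" "b - N \<notin> S" for S
  proof -
    have "card (insert (b - N) (S - {b})) = Suc (card (S - {b}))"
      using that by (simp add: card_insert_disjoint)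
    also have "\<dots> = card S" using that card_gt_0_iff[of S] by (simp add: card_Suc_Diff1) (metis Suc_pred empty_iff)
    finally show ?thesis .
  qed
  ultimately have "card (Bset t' l' \<inter> {M..}) = card (Bset t l \<inter> {M..})"
    using cl[OF c1(1) mem] by simp
  then have "nat (t - M) = nat (t' - M)" using c1 c2 by simp
  moreover have "M \<le> t" "M \<le> t'" by (auto simp: M_def)
  ultimately show ?thesis by simp
qed

lemma beta_move: "is_beta_set A \<Longrightarrow> is_beta_set (insert x (A - {y}))"
  unfolding is_beta_set_def
proof (elim conjE exE)
  fix n m assume n: "\<forall>z\<le>n. z \<in> A" and m: "\<forall>z\<ge>m. z \<notin> A"
  show "(\<exists>n. \<forall>z\<le>n. z \<in> insert x (A - {y})) \<and> (\<exists>n. \<forall>z\<ge>n. z \<notin> insert x (A - {y}))"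
  proof
    show "\<exists>n. \<forall>z\<le>n. z \<in> insert x (A - {y})"
      by (rule exI[of _ "min n (y - 1)"]) (use n in auto)
    show "\<exists>n. \<forall>z\<ge>n. z \<notin> insert x (A - {y})"
      by (rule exI[of _ "max m (x + 1)"]) (use m in auto)
  qed
qed

lemma snd_pair_move:
  assumes "is_beta_set A" "b \<in> A" "b - N \<notin> A" "0 < N"
  shows "snd (pair_of A) = snd (pair_of (insert (b - N) (A - {b})))"
proof -
  let ?A' = "insert (b - N) (A - {b})"
  have "is_beta_set ?A'" using beta_move[OF assms(1)] .
  from pair_of_beta[OF this] pair_of_beta[OF assms(1)] show ?thesis
    using charge_move[of "fst (pair_of A)" "fst (pair_of ?A')" "snd (pair_of ?A')" b N "snd (pair_of A)"]
      assms by simp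
qed

lemma snd_pair_move_plus:
  assumes "is_beta_set A" "c \<in> A" "c + N \<notin> A" "0 < N"
  shows "snd (pair_of A) = snd (pair_of (insert (c + N) (A - {c})))"
proof -
  let ?A' = "insert (c + N) (A - {c})"
  have b: "is_beta_set ?A'" using beta_move[OF assms(1)] .
  have "A = insert ((c + N) - N) (?A' - {c + N})" using assms by auto
  moreover have "snd (pair_of ?A') = snd (pair_of (insert ((c + N) - N) (?A' - {c + N})))"
    by (rule snd_pair_move[OF b]) (use assms in auto)
  ultimately show ?thesis by simp
qed

lemma smono_ge:
  fixes f :: "int \<Rightarrow> int"
  assumes "\<And>x y. x < y \<Longrightarrow> f x < f y"
  shows "f 0 + int n \<le> f (int n)" "f (- int n) \<le> f 0 - int n"
proof -
  show "f 0 + int n \<le> f (int n)"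
  proof (induction n)
    case (Suc n) then show ?case using assms[of "int n" "int (Suc n)"] by simp
  qed simp
  show "f (- int n) \<le> f 0 - int n"
  proof (induction n)
    case (Suc n) then show ?case using assms[of "- int (Suc n)" "- int n"] by simp
  qed simp
qed

lemma beta_preimage:
  fixes f :: "int \<Rightarrow> int"
  assumes mono: "\<And>x y. x < y \<Longrightarrow> f x < f y" and B: "is_beta_set B"
  shows "is_beta_set {q. f q \<in> B}"
proof -
  have up: "f 0 + x \<le> f x" if "0 \<le> x" for x
    using smono_ge(1)[OF mono, where n="nat x"] that by simp
  have lo: "f x \<le> f 0 + x" if "x \<le> 0" for x
    using smono_ge(2)[OF mono, where n="nat (- x)"] that by simp
  obtain n m where n: "\<forall>x\<le>n. x \<in> B" and m: "\<forall>x\<ge>m. x \<notin> B" using B by (auto simp: is_beta_set_def)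
  have "\<forall>q\<le>min 0 (n - f 0). f q \<in> B"
  proof (intro allI impI)
    fix q assume "q \<le> min 0 (n - f 0)"
    then show "f q \<in> B" using lo[of q] n by auto
  qed
  moreover have "\<forall>q\<ge>max 0 (m - f 0). f q \<notin> B"
  proof (intro allI impI)
    fix q assume "max 0 (m - f 0) \<le> q"
    then show "f q \<notin> B" using up[of q] m by auto
  qed
  ultimately show ?thesis unfolding is_beta_set_def by blast
qed

definition mvl :: "nat \<Rightarrow> nat \<Rightarrow> int set list \<Rightarrow> int set list \<Rightarrow> bool" where
  "mvl N m L L' \<longleftrightarrow> (\<exists>k1<m. \<exists>k2<m. \<exists>b c.
        let B = L; B' = B[k1 := insert (b - int N) (B ! k1 - {b})] in
        b \<in> B ! k1 \<and> b - int N \<notin> B ! k1 \<and>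
        c \<in> B' ! k2 \<and> c + int N \<notin> B' ! k2 \<and>
        L' = B'[k2 := insert (c + int N) (B' ! k2 - {c})])"

lemma move1_mvl: "move1 N m X Y \<longleftrightarrow> in_A m X \<and> in_A m Y \<and> snd X = snd Y \<and> mvl N m (bsets X) (bsets Y)"
  unfolding move1_def mvl_def by simp

definition step :: "int \<Rightarrow> int set \<Rightarrow> int set \<Rightarrow> bool" where
  "step M B B2 \<longleftrightarrow> (\<exists>b c. let B1 = insert (b - M) (B - {b}) in
     b \<in> B \<and> b - M \<notin> B \<and> c \<in> B1 \<and> c + M \<notin> B1 \<and> B2 = insert (c + M) (B1 - {c}))"

lemma mvl_charges:
  assumes "mvl N m L L'" "0 < N" "length L = m" "\<And>k. k < m \<Longrightarrow> is_beta_set (L ! k)"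
  shows "k < m \<Longrightarrow> snd (pair_of (L ! k)) = snd (pair_of (L' ! k))"
proof -
  assume k: "k < m"
  from assms(1) obtain k1 k2 b c where k12: "k1 < m" "k2 < m" and
    h: "b \<in> L ! k1" "b - int N \<notin> L ! k1"
      "c \<in> L[k1 := insert (b - int N) (L ! k1 - {b})] ! k2"
      "c + int N \<notin> L[k1 := insert (b - int N) (L ! k1 - {b})] ! k2"
      "L' = (L[k1 := insert (b - int N) (L ! k1 - {b})])[k2 := insert (c + int N) (L[k1 := insert (b - int N) (L ! k1 - {b})] ! k2 - {c})]"
    unfolding mvl_def Let_def by blast
  define B' where "B' = L[k1 := insert (b - int N) (L ! k1 - {b})]"
  have lB': "length B' = m" using assms(3) by (simp add: B'_def)
  have B'k: "B' ! k = (if k = k1 then insert (b - int N) (L ! k1 - {b}) else L ! k)"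
    using k assms(3) by (simp add: B'_def)
  have e1: "snd (pair_of (L ! k)) = snd (pair_of (B' ! k))"
    using snd_pair_move[OF assms(4)[OF k12(1)] h(1) h(2)] assms(2) B'k by auto
  have bb: "is_beta_set (B' ! k)" using B'k assms(4)[OF k] beta_move[OF assms(4)[OF k12(1)]] by auto
  have L'k: "L' ! k = (if k = k2 then insert (c + int N) (B' ! k2 - {c}) else B' ! k)"
    using h(5) k lB' by (simp add: B'_def[symmetric])
  have e2: "snd (pair_of (B' ! k)) = snd (pair_of (L' ! k))"
    using snd_pair_move_plus[OF bb, of c "int N"] h(3,4) assms(2) L'k by (auto simp: B'_def)
  show ?thesis using e1 e2 by simp
qed

locale gmap =
  fixes g :: "nat \<Rightarrow> int \<Rightarrow> int" and m :: nat and N :: nat and M :: int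
  assumes shift: "k < m \<Longrightarrow> g k (q - int N) = g k q - M"
    and ginj: "k < m \<Longrightarrow> k' < m \<Longrightarrow> g k q = g k' q' \<Longrightarrow> k = k' \<and> q = q'"
    and gsurj: "\<exists>k<m. \<exists>q. g k q = y"
    and gmono: "k < m \<Longrightarrow> q < q' \<Longrightarrow> g k q < g k q'"
begin

definition Bs :: "int set \<Rightarrow> int set list" where
  "Bs B = map (\<lambda>k. {q. g k q \<in> B}) [0..<m]"

lemma shift_plus: "k < m \<Longrightarrow> g k (q + int N) = g k q + M"
  using shift[of k "q + int N"] by simp

lemma Bs_len[simp]: "length (Bs B) = m" by (simp add: Bs_def)

lemma Bs_nth: "k < m \<Longrightarrow> Bs B ! k = {q. g k q \<in> B}" by (simp add: Bs_def)

lemma Bs_upd_minus: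
  assumes "k0 < m"
  shows "Bs (insert (g k0 q0 - M) (B - {g k0 q0})) = (Bs B)[k0 := insert (q0 - int N) (Bs B ! k0 - {q0})]"
proof (rule nth_equalityI)
  fix k assume "k < length (Bs (insert (g k0 q0 - M) (B - {g k0 q0})))"
  then have k: "k < m" by simp
  have e: "g k0 q0 - M = g k0 (q0 - int N)" using shift[OF assms] by simp
  have "g k q = g k0 (q0 - int N) \<longleftrightarrow> k = k0 \<and> q = q0 - int N" for q using ginj[OF k assms] by auto
  moreover have "g k q = g k0 q0 \<longleftrightarrow> k = k0 \<and> q = q0" for q using ginj[OF k assms] by auto
  ultimately show "Bs (insert (g k0 q0 - M) (B - {g k0 q0})) ! k = (Bs B)[k0 := insert (q0 - int N) (Bs B ! k0 - {q0})] ! k"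
    using k assms by (cases "k = k0") (auto simp: Bs_nth e nth_list_update)
qed simp

lemma Bs_upd_plus:
  assumes "k0 < m"
  shows "Bs (insert (g k0 q0 + M) (B - {g k0 q0})) = (Bs B)[k0 := insert (q0 + int N) (Bs B ! k0 - {q0})]"
proof (rule nth_equalityI)
  fix k assume "k < length (Bs (insert (g k0 q0 + M) (B - {g k0 q0})))"
  then have k: "k < m" by simp
  have e: "g k0 q0 + M = g k0 (q0 + int N)" using shift_plus[OF assms] by simp
  have "g k q = g k0 (q0 + int N) \<longleftrightarrow> k = k0 \<and> q = q0 + int N" for q using ginj[OF k assms] by auto
  moreover have "g k q = g k0 q0 \<longleftrightarrow> k = k0 \<and> q = q0" for q using ginj[OF k assms] by auto
  ultimately show "Bs (insert (g k0 q0 + M) (B - {g k0 q0})) ! k = (Bs B)[k0 := insert (q0 + int N) (Bs B ! k0 - {q0})] ! k"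
    using k assms by (cases "k = k0") (auto simp: Bs_nth e nth_list_update)
qed simp

lemma Bs_inj: "Bs B = Bs B' \<Longrightarrow> B = B'"
proof -
  assume eq: "Bs B = Bs B'"
  have "y \<in> B \<longleftrightarrow> y \<in> B'" for y
  proof -
    obtain k q where k: "k < m" "g k q = y" using gsurj by blast
    have "Bs B ! k = Bs B' ! k" using eq by simp
    then show ?thesis using k by (auto simp: Bs_nth)
  qed
  then show ?thesis by blast
qed

lemma mvl_step: "mvl N m (Bs B) (Bs B2) \<longleftrightarrow> step M B B2"
proof
  assume "mvl N m (Bs B) (Bs B2)"
  then obtain k1 k2 b c where k12: "k1 < m" "k2 < m" and
    h: "b \<in> Bs B ! k1" "b - int N \<notin> Bs B ! k1"
      "c \<in> (Bs B)[k1 := insert (b - int N) (Bs B ! k1 - {b})] ! k2"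
      "c + int N \<notin> (Bs B)[k1 := insert (b - int N) (Bs B ! k1 - {b})] ! k2"
      "Bs B2 = ((Bs B)[k1 := insert (b - int N) (Bs B ! k1 - {b})])[k2 := insert (c + int N) ((Bs B)[k1 := insert (b - int N) (Bs B ! k1 - {b})] ! k2 - {c})]"
    unfolding mvl_def Let_def by blast
  define B1 where "B1 = insert (g k1 b - M) (B - {g k1 b})"
  have e1: "Bs B1 = (Bs B)[k1 := insert (b - int N) (Bs B ! k1 - {b})]"
    unfolding B1_def by (rule Bs_upd_minus[OF k12(1)])
  have "Bs B2 = Bs (insert (g k2 c + M) (B1 - {g k2 c}))"
    using h(5) Bs_upd_plus[OF k12(2), of c B1] e1 by simp
  then have B2: "B2 = insert (g k2 c + M) (B1 - {g k2 c})" by (rule Bs_inj)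
  have c1: "g k1 b \<in> B" "g k1 b - M \<notin> B"
    using h(1,2) k12 shift[OF k12(1), of b] by (auto simp: Bs_nth)
  have "c \<in> Bs B1 ! k2" "c + int N \<notin> Bs B1 ! k2" using h(3,4) by (simp_all add: e1)
  then have c2: "g k2 c \<in> B1" "g k2 c + M \<notin> B1"
    using k12 shift_plus[OF k12(2), of c] by (auto simp: Bs_nth)
  show "step M B B2" unfolding step_def Let_def
    by (rule exI[of _ "g k1 b"], rule exI[of _ "g k2 c"]) (use c1 c2 B2 B1_def in auto)
next
  assume "step M B B2"
  then obtain b c where h: "b \<in> B" "b - M \<notin> B" "c \<in> insert (b - M) (B - {b})"
    "c + M \<notin> insert (b - M) (B - {b})" "B2 = insert (c + M) (insert (b - M) (B - {b}) - {c})"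
    unfolding step_def Let_def by blast
  obtain k1 q1 where q1: "k1 < m" "g k1 q1 = b" using gsurj by blast
  obtain k2 q2 where q2: "k2 < m" "g k2 q2 = c" using gsurj by blast
  define B1 where "B1 = insert (b - M) (B - {b})"
  have e1: "Bs B1 = (Bs B)[k1 := insert (q1 - int N) (Bs B ! k1 - {q1})]"
    unfolding B1_def using Bs_upd_minus[OF q1(1), of q1 B] q1 by simp
  have e2: "Bs B2 = (Bs B1)[k2 := insert (q2 + int N) (Bs B1 ! k2 - {q2})]"
    using Bs_upd_plus[OF q2(1), of q2 B1] q2 h(5) by (simp add: B1_def)
  have c1: "q1 \<in> Bs B ! k1" "q1 - int N \<notin> Bs B ! k1"
    using h(1,2) q1 shift[OF q1(1), of q1] by (auto simp: Bs_nth)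
  have c2: "q2 \<in> Bs B1 ! k2" "q2 + int N \<notin> Bs B1 ! k2"
    using h(3,4) q2 shift_plus[OF q2(1), of q2] by (auto simp: Bs_nth B1_def)
  show "mvl N m (Bs B) (Bs B2)" unfolding mvl_def Let_def
    apply (rule exI[of _ k1], rule conjI[OF q1(1)])
    apply (rule exI[of _ k2], rule conjI[OF q2(1)])
    apply (rule exI[of _ q1], rule exI[of _ q2])
    using c1 c2 e1 e2 by simp
qed

lemma Bs_beta: "is_beta_set B \<Longrightarrow> k < m \<Longrightarrow> is_beta_set (Bs B ! k)"
  using beta_preimage[of "g k" B] gmono by (simp add: Bs_nth)

lemma union_beta:
  assumes "\<And>k. k < m \<Longrightarrow> is_beta_set (A k)"
  shows "is_beta_set (\<Union>k<m. g k ` A k)"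
proof -
  have "\<forall>k\<in>{..<m}. \<exists>n. \<forall>x\<le>n. x \<in> A k" using assms by (auto simp: is_beta_set_def)
  then obtain nf where nf: "\<And>k. k < m \<Longrightarrow> \<forall>x\<le>nf k. x \<in> A k" by (metis lessThan_iff)
  have "\<forall>k\<in>{..<m}. \<exists>n. \<forall>x\<ge>n. x \<notin> A k" using assms by (auto simp: is_beta_set_def)
  then obtain mf where mf: "\<And>k. k < m \<Longrightarrow> \<forall>x\<ge>mf k. x \<notin> A k" by (metis lessThan_iff)
  have bnd: "\<bar>f k\<bar> \<le> (\<Sum>j<m. \<bar>f j\<bar>)" if "k < m" for f :: "nat \<Rightarrow> int" and k
    using that by (intro member_le_sum) auto
  define n0 where "n0 = - (\<Sum>k<m. \<bar>nf k\<bar>)"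
  define L where "L = - (\<Sum>k<m. \<bar>g k n0\<bar>)"
  define m0 where "m0 = (\<Sum>k<m. \<bar>mf k\<bar>)"
  define U where "U = (\<Sum>k<m. \<bar>g k m0\<bar>)"
  have low: "\<forall>y\<le>L. y \<in> (\<Union>k<m. g k ` A k)"
  proof (intro allI impI)
    fix y assume y: "y \<le> L"
    obtain k q where kq: "k < m" "g k q = y" using gsurj by blast
    have "L \<le> g k n0" using bnd[OF kq(1), of "\<lambda>k. g k n0"] by (simp add: L_def)
    then have "q \<le> n0" using gmono[OF kq(1), of n0 q] y kq by (meson le_less_trans linorder_not_le order_less_irrefl)
    moreover have "n0 \<le> nf k" using bnd[OF kq(1), of nf] by (simp add: n0_def)
    ultimately have "q \<in> A k" using nf[OF kq(1)] by auto
    then show "y \<in> (\<Union>k<m. g k ` A k)" using kq by auto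
  qed
  have high: "\<forall>y\<ge>U. y \<notin> (\<Union>k<m. g k ` A k)"
  proof (intro allI impI notI)
    fix y assume y: "U \<le> y" "y \<in> (\<Union>k<m. g k ` A k)"
    then obtain k q where kq: "k < m" "q \<in> A k" "y = g k q" by auto
    have "g k m0 \<le> U" using bnd[OF kq(1), of "\<lambda>k. g k m0"] by (simp add: U_def)
    then have "m0 \<le> q" using gmono[OF kq(1), of q m0] y kq by (meson le_less_trans linorder_not_le order_less_irrefl)
    moreover have "mf k \<le> m0" using bnd[OF kq(1), of mf] by (simp add: m0_def)
    ultimately show False using mf[OF kq(1)] kq(2) by auto
  qed
  show ?thesis unfolding is_beta_set_def using low high by blast
qed

end

lemma divmod_unique:
  fixes q q' i i' e :: int
  assumes "0 \<le> i" "i < e" "0 \<le> i'" "i' < e" "q * e + i = q' * e + i'"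
  shows "q = q' \<and> i = i'"
proof -
  have "(q * e + i) div e = q" "(q * e + i) mod e = i" using assms(1,2) by simp_all
  moreover have "(q' * e + i') div e = q'" "(q' * e + i') mod e = i'" using assms(3,4) by simp_all
  ultimately show ?thesis using assms(5) by metis
qed

lemma lin_less:
  fixes D D' i i' e :: int
  assumes "D < D'" "0 \<le> i" "i < e" "0 \<le> i'"
  shows "D * e + i < D' * e + i'"
proof -
  have "(D + 1) * e \<le> D' * e" using assms by (intro mult_right_mono) auto
  then show ?thesis using assms by (simp add: algebra_simps)
qed

lemma gmap_eta:
  assumes "0 < e"
  shows "gmap (\<lambda>k q. q * int e + int k) e r (int r * int e)"
proof
  fix k q show "(q - int r) * int e + int k = q * int e + int k - int r * int e"
    by (simp add: algebra_simps)
next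
  fix k k' q q' assume "k < e" "k' < e" "q * int e + int k = q' * int e + int k'"
  then show "k = k' \<and> q = q'" using divmod_unique[of "int k" "int e" "int k'" q q'] by auto
next
  fix y
  have "y = y div int e * int e + int (nat (y mod int e))" using assms by simp
  moreover have "nat (y mod int e) < e" using assms by (simp add: nat_less_iff)
  ultimately show "\<exists>k<e. \<exists>q. q * int e + int k = y" by metis
next
  fix k and q q' :: int assume "q < q'"
  then show "q * int e + int k < q' * int e + int k" using assms by simp
qed

lemma psi_alt:
  "psi e r (Suc k) x = (x div int e * int r + (int r - 1 - int k)) * int e + x mod int e"
  by (simp add: psi_def algebra_simps)

lemma gmap_psi:
  assumes "0 < e" "0 < r"
  shows "gmap (\<lambda>k x. psi e r (Suc k) x) r e (int r * int e)"
proof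
  fix k q
  have qe: "q - int e = q + (-1) * int e" by simp
  have d: "(q - int e) div int e = q div int e - 1" "(q - int e) mod int e = q mod int e"
    unfolding qe using assms by (simp_all only: div_mult_self1 mod_mult_self1)
  show "psi e r (Suc k) (q - int e) = psi e r (Suc k) q - int r * int e"
    unfolding psi_alt d by (simp add: algebra_simps)
next
  fix k k' q q' assume kk: "k < r" "k' < r" "psi e r (Suc k) q = psi e r (Suc k') q'"
  have e0: "0 < int e" using assms by simp
  have m: "0 \<le> q mod int e" "q mod int e < int e" "0 \<le> q' mod int e" "q' mod int e < int e"
    using e0 by simp_all
  have h0: "q div int e * int r + (int r - 1 - int k) = q' div int e * int r + (int r - 1 - int k') \<and>
      q mod int e = q' mod int e"
    using divmod_unique[OF m kk(3)[unfolded psi_alt]] by blast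
  have m2: "0 \<le> int r - 1 - int k" "int r - 1 - int k < int r" "0 \<le> int r - 1 - int k'" "int r - 1 - int k' < int r"
    using kk(1,2) by simp_all
  have h1: "q div int e = q' div int e \<and> int r - 1 - int k = int r - 1 - int k'"
    using divmod_unique[OF m2] h0 by blast
  have "q = q div int e * int e + q mod int e" by simp
  also have "\<dots> = q' div int e * int e + q' mod int e" using h0 h1 by simp
  also have "\<dots> = q'" by simp
  finally have "q = q'" .
  then show "k = k' \<and> q = q'" using h1 by simp
next
  fix y
  define c where "c = y div int e"
  define a where "a = c div int r"
  define j where "j = c mod int r"
  define k where "k = nat (int r - 1 - j)"
  define x where "x = a * int e + y mod int e"
  have j: "0 \<le> j" "j < int r" using assms by (simp_all add: j_def)
  have k: "k < r" "int k = int r - 1 - j" using j by (auto simp: k_def)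
  have xd: "x div int e = a" "x mod int e = y mod int e" using assms by (simp_all add: x_def)
  have ac: "a * int r + j = c" unfolding a_def j_def by simp
  have "psi e r (Suc k) x = (a * int r + j) * int e + y mod int e"
    unfolding psi_alt xd k(2) by simp
  also have "\<dots> = y" unfolding ac c_def by simp
  finally show "\<exists>k<r. \<exists>q. psi e r (Suc k) q = y" using k(1) by blast
next
  fix k and q q' :: int assume kr: "k < r" and qq: "q < q'"
  have e0: "0 < int e" using assms by simp
  have dle: "q div int e \<le> q' div int e" by (rule zdiv_mono1) (use qq e0 in auto)
  show "psi e r (Suc k) q < psi e r (Suc k) q'"
  proof (cases "q div int e = q' div int e")
    case True
    have "q = q' div int e * int e + q mod int e" by (simp add: True[symmetric])
    moreover have "q' = q' div int e * int e + q' mod int e" by simp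
    ultimately
    have "q mod int e < q' mod int e" using qq by linarith
    then show ?thesis unfolding psi_alt True by (rule add_strict_left_mono)
  next
    case False
    then have "q div int e < q' div int e" using dle by simp
    then have "q div int e * int r < q' div int e * int r" using assms(2) by simp
    then have DD: "q div int e * int r + (int r - 1 - int k) < q' div int e * int r + (int r - 1 - int k)"
      by simp
    have m1: "0 \<le> q mod int e" "q mod int e < int e" "0 \<le> q' mod int e"
      using e0 by simp_all
    show ?thesis unfolding psi_alt by (rule lin_less[OF DD m1])
  qed
qed

lemma UN_shift: "(\<Union>k\<in>{1..r}. F k) = (\<Union>k<r. F (Suc k))"
  unfolding image_Suc_lessThan[symmetric] by (simp add: image_image)

lemma move_iff:
  assumes "in_A m X" "in_A m Y" "bsets X = LX" "bsets Y = LY"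
    "snd X = map (\<lambda>k. snd (pair_of (LX ! k))) [0..<m]"
    "snd Y = map (\<lambda>k. snd (pair_of (LY ! k))) [0..<m]"
    "length LX = m" "\<And>k. k < m \<Longrightarrow> is_beta_set (LX ! k)" "0 < N"
  shows "move1 N m X Y \<longleftrightarrow> mvl N m LX LY"
proof -
  have "snd X = snd Y" if "mvl N m LX LY"
    unfolding assms(5,6) using mvl_charges[OF that assms(9,7,8)] by simp
  then show ?thesis using assms(1-4) by (auto simp: move1_mvl)
qed

lemma UN_pre:
  assumes "gmap g m N M" shows "(\<Union>k<m. g k ` {q. g k q \<in> B}) = B"
proof
  show "(\<Union>k<m. g k ` {q. g k q \<in> B}) \<subseteq> B" by blast
  show "B \<subseteq> (\<Union>k<m. g k ` {q. g k q \<in> B})"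
  proof
    fix y assume y: "y \<in> B"
    obtain k q where kq: "k < m" "g k q = y" using gmap.gsurj[OF assms] by blast
    then show "y \<in> (\<Union>k<m. g k ` {q. g k q \<in> B})" using y by blast
  qed
qed

theorem lemma2p11:
  fixes e r :: nat and lam mu :: partition and s :: int
  assumes "2 \<le> e" and "2 \<le> r"
    and "is_part lam" and "is_part mu"
    and "sim_e e lam mu"
  shows "move1 r e (eta e (lam, s)) (eta e (mu, s)) \<longleftrightarrow>
         move1 e r (Phi e r (lam, s)) (Phi e r (mu, s))"
proof -
  have e0: "0 < e" and r0: "0 < r" using assms(1,2) by auto
  interpret E: gmap "\<lambda>k q. q * int e + int k" e r "int r * int e" by (rule gmap_eta[OF e0])
  interpret P: gmap "\<lambda>k x. psi e r (Suc k) x" r e "int r * int e" by (rule gmap_psi[OF e0 r0])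
  have etaF: "in_A e (eta e (l, s)) \<and> bsets (eta e (l, s)) = E.Bs (Bset s l) \<and>
     snd (eta e (l, s)) = map (\<lambda>k. snd (pair_of (E.Bs (Bset s l) ! k))) [0..<e]"
    if l: "is_part l" for l
  proof -
    define B where "B = Bset s l"
    have C: "{(b - int i) div int e | b. b \<in> B \<and> b mod int e = int i} = E.Bs B ! i" if "i < e" for i
    proof -
      have "x \<in> {(b - int i) div int e | b. b \<in> B \<and> b mod int e = int i} \<longleftrightarrow> x * int e + int i \<in> B" for x
      proof
        assume "x \<in> {(b - int i) div int e | b. b \<in> B \<and> b mod int e = int i}"
        then obtain b where b: "b \<in> B" "b mod int e = int i" "x = (b - int i) div int e" by auto
        have "b = b div int e * int e + b mod int e" by simp
        then have h: "b - int i = b div int e * int e" using b(2) by linarith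
        then have "x = b div int e" using b(3) e0 by simp
        then show "x * int e + int i \<in> B" using b(1) h by (simp add: algebra_simps)
      next
        assume h1: "x * int e + int i \<in> B"
        have h2: "(x * int e + int i) mod int e = int i" using that by simp
        have h3: "(x * int e + int i - int i) div int e = x" using e0 by simp
        show "x \<in> {(b - int i) div int e | b. b \<in> B \<and> b mod int e = int i}"
          by (rule CollectI, rule exI[of _ "x * int e + int i"]) (simp only: h1 h2 h3 simp_thms)
      qed
      then show ?thesis using that by (auto simp: E.Bs_nth)
    qed
    have bet: "is_beta_set (E.Bs B ! i)" if "i < e" for i using E.Bs_beta[OF Bset_beta that] by (simp add: B_def)
    have X: "eta e (l, s) = (map (\<lambda>i. fst (pair_of (E.Bs B ! i))) [0..<e], map (\<lambda>i. snd (pair_of (E.Bs B ! i))) [0..<e])"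
      unfolding eta_def Let_def fst_conv snd_conv B_def[symmetric]
      by (intro arg_cong2[where f=Pair] map_cong refl) (auto simp: C)
    have "in_A e (eta e (l, s))" unfolding X in_A_def using bet pair_of_beta by auto
    moreover have "bsets (eta e (l, s)) = E.Bs B"
    proof -
      have "bsets (eta e (l, s)) = map (\<lambda>k. E.Bs B ! k) [0..<e]"
        unfolding X bsets_def by (intro map_cong) (auto simp: pair_of_beta[OF bet])
      also have "\<dots> = E.Bs B" by (metis E.Bs_len map_nth)
      finally show ?thesis .
    qed
    ultimately show ?thesis by (simp add: X B_def)
  qed
  have phiF: "in_A r (Phi e r (l, s)) \<and> bsets (Phi e r (l, s)) = P.Bs (Bset s l) \<and>
     snd (Phi e r (l, s)) = map (\<lambda>k. snd (pair_of (P.Bs (Bset s l) ! k))) [0..<r]"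
    if l: "is_part l" for l
  proof -
    define B where "B = Bset s l"
    have bet: "is_beta_set (P.Bs B ! i)" if "i < r" for i using P.Bs_beta[OF Bset_beta that] by (simp add: B_def)
    define X0 where "X0 = (map (\<lambda>i. fst (pair_of (P.Bs B ! i))) [0..<r], map (\<lambda>i. snd (pair_of (P.Bs B ! i))) [0..<r])"
    have inA: "in_A r X0" unfolding X0_def in_A_def using bet pair_of_beta by auto
    have UX: "(\<Union>k\<in>{1..r}. psi e r k ` Bset (snd X ! (k - 1)) (fst X ! (k - 1)))
        = (\<Union>k<r. psi e r (Suc k) ` Bset (snd X ! k) (fst X ! k))" for X :: mconfig
      using UN_shift[where r=r and F="\<lambda>k. psi e r k ` Bset (snd X ! (k - 1)) (fst X ! (k - 1))"] by simp
    have bsX0: "Bset (snd X0 ! k) (fst X0 ! k) = P.Bs B ! k" if "k < r" for k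
      using that pair_of_beta[OF bet[OF that]] by (simp add: X0_def)
    have PsiX0: "Psi e r X0 = (l, s)"
    proof -
      have "(\<Union>k<r. psi e r (Suc k) ` Bset (snd X0 ! k) (fst X0 ! k)) = (\<Union>k<r. psi e r (Suc k) ` (P.Bs B ! k))"
        using bsX0 by simp
      also have "\<dots> = B" using UN_pre[OF P.gmap_axioms] by (simp add: P.Bs_nth)
      finally show ?thesis unfolding Psi_def UX using pair_of_Bset[OF l] by (simp add: B_def)
    qed
    have uniq: "X = X0" if X: "in_A r X" "Psi e r X = (l, s)" for X
    proof -
      have parts: "is_part (fst X ! k)" if "k < r" for k using X(1) that by (auto simp: in_A_def)
      define U where "U = (\<Union>k<r. psi e r (Suc k) ` Bset (snd X ! k) (fst X ! k))"
      have "is_beta_set U" unfolding U_def by (rule P.union_beta) (rule Bset_beta)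
      then have "Bset s l = U" using pair_of_beta[of U] X(2) unfolding Psi_def UX U_def[symmetric] by simp
      then have BU: "B = U" by (simp add: B_def)
      have Bk: "P.Bs B ! k = Bset (snd X ! k) (fst X ! k)" if k: "k < r" for k
      proof (intro set_eqI iffI)
        fix x assume "x \<in> P.Bs B ! k"
        then have "psi e r (Suc k) x \<in> U" using k by (simp add: P.Bs_nth BU)
        then obtain k' x' where kx: "k' < r" "x' \<in> Bset (snd X ! k') (fst X ! k')"
          "psi e r (Suc k) x = psi e r (Suc k') x'" unfolding U_def by blast
        from P.ginj[OF k kx(1) kx(3)] have "k = k' \<and> x = x'" .
        then show "x \<in> Bset (snd X ! k) (fst X ! k)" using kx(2) by simp
      next
        fix x assume "x \<in> Bset (snd X ! k) (fst X ! k)"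
        then have "psi e r (Suc k) x \<in> U" unfolding U_def using k by blast
        then show "x \<in> P.Bs B ! k" using k by (simp add: P.Bs_nth BU)
      qed
      have pk: "pair_of (P.Bs B ! k) = (fst X ! k, snd X ! k)" if "k < r" for k
        using Bk[OF that] pair_of_Bset[OF parts[OF that]] by simp
      have lens: "length (fst X) = r" "length (snd X) = r" using X(1) by (auto simp: in_A_def)
      have "fst X = fst X0" by (rule nth_equalityI) (simp_all add: lens X0_def pk)
      moreover have "snd X = snd X0" by (rule nth_equalityI) (simp_all add: lens X0_def pk)
      ultimately show ?thesis by (simp add: prod_eq_iff)
    qed
    have Phi: "Phi e r (l, s) = X0" unfolding Phi_def
      apply (rule the_equality)
      using inA PsiX0 apply simp
      using uniq by blast
    have "bsets X0 = map (\<lambda>k. P.Bs B ! k) [0..<r]"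
    proof -
      have lenX0: "length (fst X0) = r" by (simp add: X0_def)
      show ?thesis unfolding bsets_def lenX0 by (intro map_cong refl) (simp add: bsX0)
    qed
    also have "\<dots> = P.Bs B" by (metis P.Bs_len map_nth)
    finally show ?thesis using inA by (simp add: Phi X0_def B_def)
  qed
  define M where "M = int r * int e"
  have L: "move1 r e (eta e (lam, s)) (eta e (mu, s)) \<longleftrightarrow> step M (Bset s lam) (Bset s mu)"
    using move_iff[of e "eta e (lam, s)" "eta e (mu, s)"] etaF[OF assms(3)] etaF[OF assms(4)]
      E.Bs_beta[OF Bset_beta] E.mvl_step r0 by (simp add: M_def)
  have R: "move1 e r (Phi e r (lam, s)) (Phi e r (mu, s)) \<longleftrightarrow> step M (Bset s lam) (Bset s mu)"
    using move_iff[of r "Phi e r (lam, s)" "Phi e r (mu, s)"] phiF[OF assms(3)] phiF[OF assms(4)]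
      P.Bs_beta[OF Bset_beta] P.mvl_step e0 by (simp add: M_def)
  show ?thesis using L R by simp
qed

end
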